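(* There exists an infinite family of tries $\mathcal T$ with $n$ nodes (for arbitrarily large $n$) for which $r=\Theta(n\mathcal H_0(\mathcal T))=\Theta(n)$, where $r$ is the number of XBWT runs of $\mathcal T$.
   Context: A trie over a finite totally ordered alphabet $\Sigma$ is a rooted ordered tree with edges labeled by symbols of $\Sigma$ such that edges leaving the same node have distinct labels and siblings are ordered by their incoming labels. $n_c$ is the number of edges labeled $c$ and $out(u)$ the set of labels of edges leaving $u$. Logs base 2, $0\log(x/0)=0$. $\mathcal H_0(\mathcal T)=\sum_{c\in\Sigma}\left[\frac{n_c}{n}\log\frac{n}{n_c}+\frac{n-n_c}{n}\log\frac{n}{n-n_c}\right]$. Let $u_1,\dots,u_n$ be the nodes sorted co-lexicographically (right-to-left comparison, $\epsilon$ smallest) by the root-to-node path label. An index $i\in[n]$ is a $c$-run break if $c\in out(u_i)$ and either $i=n$ or $c\notin out(u_{i+1})$; $r=\sum_{c\in\Sigma}r_c$ where $r_c$ is the number of $c$-run breaks. *)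

theory Defs
  imports Main "HOL.Transcendental"
begin

text \<open>A trie over a finite totally ordered alphabet Alph is represented by the set of
  root-to-node path labels of its nodes: a finite, prefix-closed set of words over Alph
  containing the empty word (the root). Edges correspond to nonempty nodes; the label of
  the edge entering node w is last w. Siblings are automatically distinct-labelled and
  ordered by their labels.\<close>

definition is_trie :: "'a::linorder set \<Rightarrow> 'a list set \<Rightarrow> bool" where
  "is_trie Alph T \<longleftrightarrow> finite Alph \<and> finite T \<and> [] \<in> T \<and>
     (\<forall>w\<in>T. set w \<subseteq> Alph) \<and> (\<forall>w c. w @ [c] \<in> T \<longrightarrow> w \<in> T)"

definition num_nodes :: "'a list set \<Rightarrow> nat" where
  "num_nodes T = card T"

definition num_edges_lab :: "'a list set \<Rightarrow> 'a \<Rightarrow> nat" where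
  "num_edges_lab T c = card {w \<in> T. w \<noteq> [] \<and> last w = c}"

definition out :: "'a list set \<Rightarrow> 'a list \<Rightarrow> 'a set" where
  "out T u = {c. u @ [c] \<in> T}"

definition ent_term :: "nat \<Rightarrow> nat \<Rightarrow> real" where
  "ent_term n k = (if k = 0 then 0 else real k / real n * log 2 (real n / real k))"

definition H0 :: "'a set \<Rightarrow> 'a list set \<Rightarrow> real" where
  "H0 Alph T = (\<Sum>c\<in>Alph. ent_term (num_nodes T) (num_edges_lab T c)
                      + ent_term (num_nodes T) (num_nodes T - num_edges_lab T c))"

text \<open>Co-lexicographic order: compare right-to-left; the empty word is smallest
  (a proper suffix precedes the longer word).\<close>
definition colex_less :: "'a::linorder list \<Rightarrow> 'a list \<Rightarrow> bool" where
  "colex_less u v \<longleftrightarrow> (rev u, rev v) \<in> lexord {(a, b). a < b}"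

text \<open>The nodes u_1, ..., u_n sorted co-lexicographically (0-indexed list).\<close>
definition colex_sorted :: "'a::linorder list set \<Rightarrow> 'a list list" where
  "colex_sorted T = (THE xs. set xs = T \<and> sorted_wrt colex_less xs)"

definition run_breaks :: "'a::linorder list set \<Rightarrow> 'a \<Rightarrow> nat" where
  "run_breaks T c = (let xs = colex_sorted T; n = length xs in
     card {i. i < n \<and> c \<in> out T (xs ! i) \<and> (i = n - 1 \<or> c \<notin> out T (xs ! (i + 1)))})"

definition xbwt_runs :: "'a::linorder set \<Rightarrow> 'a list set \<Rightarrow> nat" where
  "xbwt_runs Alph T = (\<Sum>c\<in>Alph. run_breaks T c)"

end

theory Submission
  imports Defs
begin

lemma colex_irrefl: "\<not> colex_less (u::'a::linorder list) u"
  unfolding colex_less_def by (rule lexord_irreflexive) auto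

lemma colex_trans: "colex_less (u::'a::linorder list) v \<Longrightarrow> colex_less v w \<Longrightarrow> colex_less u w"
  unfolding colex_less_def
  by (erule lexord_trans) (auto simp: trans_def)

lemma sorted_unique:
  fixes xs ys :: "'a::linorder list list"
  shows "sorted_wrt colex_less xs \<Longrightarrow> sorted_wrt colex_less ys \<Longrightarrow> set xs = set ys \<Longrightarrow> xs = ys"
proof (induction xs arbitrary: ys)
  case Nil then show ?case by simp
next
  case (Cons x xs)
  then obtain y ys' where ys: "ys = y # ys'" by (cases ys) auto
  have xy: "x = y"
  proof (rule ccontr)
    assume "x \<noteq> y"
    then have "x \<in> set ys'" "y \<in> set xs" using Cons.prems ys by auto
    then have "colex_less y x" "colex_less x y" using Cons.prems ys by auto
    then show False using colex_trans colex_irrefl by blast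
  qed
  have "x \<notin> set xs" using Cons.prems colex_irrefl by auto
  moreover have "y \<notin> set ys'" using Cons.prems ys colex_irrefl by auto
  ultimately have "set xs = set ys'" using Cons.prems ys xy by auto
  then show ?case using Cons ys xy by auto
qed

lemma colex_sorted_eq:
  fixes xs :: "'a::linorder list list"
  assumes "sorted_wrt colex_less xs" "set xs = T"
  shows "colex_sorted T = xs"
  unfolding colex_sorted_def
  by (rule the_equality) (use assms sorted_unique in auto)

definition TT :: "nat \<Rightarrow> nat list set" where
  "TT m = {replicate i 0 | i. i \<le> 2*m+1} \<union> {replicate (2*j) 0 @ [1] | j. j \<le> m}"

definition XS :: "nat \<Rightarrow> nat list list" where
  "XS m = map (\<lambda>i. replicate i 0) [0..<2*m+2] @ map (\<lambda>j. replicate (2*j) 0 @ [1]) [0..<m+1]"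

lemma set_XS: "set (XS m) = TT m"
proof -
  have a: "(\<lambda>i. replicate i (0::nat)) ` {0..<2*m+2} = {replicate i 0 | i. i \<le> 2*m+1}"
    by (auto simp: image_def less_Suc_eq_le)
  have b: "(\<lambda>j. replicate (2*j) (0::nat) @ [1]) ` {0..<m+1} = {replicate (2*j) 0 @ [1] | j. j \<le> m}"
    by (auto simp: image_def less_Suc_eq_le)
  show ?thesis unfolding XS_def TT_def set_append set_map set_upt a b ..
qed

lemma colex_rep: "i < j \<Longrightarrow> colex_less (replicate i (0::nat)) (replicate j 0)"
proof -
  assume "i < j"
  then have "replicate j (0::nat) = replicate i 0 @ 0 # replicate (j-i-1) 0"
  proof -
    have "j = i + Suc (j-i-1)" using \<open>i < j\<close> by simp
    then have "replicate j (0::nat) = replicate (i + Suc (j-i-1)) 0" by (rule arg_cong)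
    then show ?thesis by (simp only: replicate_add replicate_Suc)
  qed
  then have "(replicate i (0::nat), replicate j 0) \<in> lexord {(a, b). a < b}"
    by (simp only:) (rule lexord_append_rightI, blast)
  then show ?thesis unfolding colex_less_def rev_replicate .
qed

lemma colex_rep_leaf: "colex_less (replicate i (0::nat)) (replicate j 0 @ [1])"
proof -
  have e: "rev (replicate i (0::nat)) = replicate i 0" "rev (replicate j (0::nat) @ [1]) = 1 # replicate j 0"
    by simp_all
  show ?thesis unfolding colex_less_def e by (cases i) auto
qed

lemma colex_leaf: "a < b \<Longrightarrow> colex_less (replicate a (0::nat) @ [1]) (replicate b 0 @ [1])"
  using colex_rep[of a b] unfolding colex_less_def by simp

lemma sorted_XS: "sorted_wrt colex_less (XS m)"
proof -
  have 1: "sorted_wrt colex_less (map (\<lambda>i. replicate i (0::nat)) [0..<k])" for k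
    unfolding sorted_wrt_map by (rule sorted_wrt_mono_rel[OF _ sorted_wrt_upt]) (simp add: colex_rep)
  have 2: "sorted_wrt colex_less (map (\<lambda>j. replicate (2*j) (0::nat) @ [1]) [0..<k])" for k
    unfolding sorted_wrt_map by (rule sorted_wrt_mono_rel[OF _ sorted_wrt_upt]) (simp only: colex_leaf)
  show ?thesis unfolding XS_def sorted_wrt_append set_map
    using 1 2 colex_rep_leaf by blast
qed

lemma cs_TT: "colex_sorted (TT m) = XS m"
  using colex_sorted_eq[OF sorted_XS set_XS] .

lemma sorted_distinct: "sorted_wrt colex_less (xs::'a::linorder list list) \<Longrightarrow> distinct xs"
  by (induction xs) (auto simp: colex_irrefl)

lemma len_XS: "length (XS m) = 3*m+3"
  unfolding XS_def by simp

lemma nodes_TT: "num_nodes (TT m) = 3*m+3"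
  unfolding num_nodes_def set_XS[symmetric]
  using distinct_card[OF sorted_distinct[OF sorted_XS]] len_XS by simp

lemma XS_nth1: "i < 2*m+2 \<Longrightarrow> XS m ! i = replicate i 0"
  unfolding XS_def by (simp add: nth_append del: upt_Suc)

lemma XS_nth2: "2*m+2 \<le> i \<Longrightarrow> i < 3*m+3 \<Longrightarrow> XS m ! i = replicate (2*(i-(2*m+2))) 0 @ [1]"
proof -
  assume a: "2*m+2 \<le> i" "i < 3*m+3"
  then have "[0..<m+1] ! (i - (2*m+2)) = i - (2*m+2)" by (intro nth_upt[where i=0, simplified]) linarith
  then show ?thesis using a unfolding XS_def by (simp add: nth_append del: upt_Suc)
qed

lemma mem_rep: "replicate i (0::nat) @ [c] \<in> TT m \<longleftrightarrow> i \<le> 2*m \<and> (c = 0 \<or> (c = 1 \<and> even i))"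
proof -
  have A: "replicate i (0::nat) @ [c] = replicate a 0 \<longleftrightarrow> c = 0 \<and> a = i+1" for a
  proof
    assume h: "replicate i (0::nat) @ [c] = replicate a 0"
    then have "length (replicate i (0::nat) @ [c]) = a" by (metis length_replicate)
    then have a: "a = i+1" by simp
    then have "replicate i (0::nat) @ [c] = replicate i 0 @ [0]" using h by (simp add: replicate_append_same)
    then show "c = 0 \<and> a = i+1" using a by simp
  qed (simp add: replicate_append_same)
  have B: "replicate i (0::nat) @ [c] = replicate j 0 @ [1] \<longleftrightarrow> c = 1 \<and> i = j" for j
  proof
    assume h: "replicate i (0::nat) @ [c] = replicate j 0 @ [1]"
    then have "length (replicate i (0::nat) @ [c]) = length (replicate j (0::nat) @ [1])"
      by (rule arg_cong)
    then have "length (replicate i (0::nat)) = length (replicate j (0::nat))"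
      by simp
    then show "c = 1 \<and> i = j" using h by simp
  qed simp
  show ?thesis unfolding TT_def using A B by (auto elim!: evenE)
qed

lemma mem_leaf: "replicate i (0::nat) @ [1, c] \<notin> TT m"
proof -
  have "replicate i (0::nat) @ [1, c] \<noteq> replicate a 0" for a
    by (metis append_Cons in_set_conv_decomp in_set_replicate zero_neq_one)
  moreover have "replicate i (0::nat) @ [1, c] \<noteq> replicate j 0 @ [1]" for j
  proof
    assume h: "replicate i (0::nat) @ [1, c] = replicate j 0 @ [1]"
    then have "length (replicate i (0::nat) @ [1, c]) = length (replicate j (0::nat) @ [1])" by (rule arg_cong)
    then have "j = i+1" by simp
    then have "replicate i (0::nat) @ [1, c] = replicate i 0 @ [0, 1]" using h
      by (metis append.assoc append_Cons append_Nil replicate_append_same Suc_eq_plus1 replicate_Suc)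
    then show False by simp
  qed
  ultimately show ?thesis unfolding TT_def by auto
qed

lemma out_XS: "i < 3*m+3 \<Longrightarrow> c \<in> out (TT m) (XS m ! i) \<longleftrightarrow> i \<le> 2*m \<and> (c = 0 \<or> (c = 1 \<and> even i))"
proof (cases "i < 2*m+2")
  case True
  then show ?thesis using XS_nth1[OF True] mem_rep unfolding out_def by auto
next
  case False
  assume "i < 3*m+3"
  then show ?thesis using XS_nth2[of m i] False mem_leaf unfolding out_def by auto
qed

lemma rb0: "run_breaks (TT m) 0 = 1"
proof -
  have "{i. i < 3*m+3 \<and> 0 \<in> out (TT m) (XS m ! i) \<and> (i = 3*m+3 - 1 \<or> 0 \<notin> out (TT m) (XS m ! (i + 1)))} = {2*m}"
    using out_XS[of _ m 0] by auto
  then show ?thesis unfolding run_breaks_def cs_TT len_XS Let_def by simp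
qed

lemma rb1: "run_breaks (TT m) 1 = m+1"
proof -
  have "{i. i < 3*m+3 \<and> 1 \<in> out (TT m) (XS m ! i) \<and> (i = 3*m+3 - 1 \<or> 1 \<notin> out (TT m) (XS m ! (i + 1)))} = (\<lambda>j. 2*j) ` {..m}"
  proof (intro set_eqI iffI)
    fix i assume "i \<in> {i. i < 3*m+3 \<and> 1 \<in> out (TT m) (XS m ! i) \<and> (i = 3*m+3 - 1 \<or> 1 \<notin> out (TT m) (XS m ! (i + 1)))}"
    then have "i \<le> 2*m" "even i" using out_XS[of i m 1] by auto
    then show "i \<in> (\<lambda>j. 2*j) ` {..m}" by (auto elim!: evenE)
  next
    fix i assume "i \<in> (\<lambda>j. 2*j) ` {..m}"
    then obtain j where j: "j \<le> m" "i = 2*j" by auto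
    then show "i \<in> {i. i < 3*m+3 \<and> 1 \<in> out (TT m) (XS m ! i) \<and> (i = 3*m+3 - 1 \<or> 1 \<notin> out (TT m) (XS m ! (i + 1)))}"
      using out_XS[of i m 1] out_XS[of "i+1" m 1] by auto
  qed
  moreover have "card ((\<lambda>j. 2*j) ` {..m}) = m+1"
    by (subst card_image) (auto simp: inj_on_def)
  ultimately show ?thesis unfolding run_breaks_def cs_TT len_XS Let_def by simp
qed

lemma runs_TT: "xbwt_runs {0,1} (TT m) = m+2"
  unfolding xbwt_runs_def using rb0 rb1 by simp

lemma trie_TT: "is_trie {0,1} (TT m)"
proof -
  have f: "finite (TT m)" unfolding set_XS[symmetric] by simp
  have e: "[] \<in> TT m" unfolding TT_def by (auto intro: exI[of _ 0])
  have s: "\<forall>w\<in>TT m. set w \<subseteq> {0,1}" unfolding TT_def by auto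
  have p: "w \<in> TT m" if "w @ [c] \<in> TT m" for w c
  proof -
    from that consider (a) i where "w @ [c] = replicate i 0" "i \<le> 2*m+1"
      | (b) j where "w @ [c] = replicate (2*j) 0 @ [1]" "j \<le> m" unfolding TT_def by auto
    then show ?thesis
    proof cases
      case a
      then have "i > 0" by (cases i) auto
      then have "i = Suc (i-1)" by simp
      then have "replicate i (0::nat) = replicate (Suc (i-1)) 0" by (rule arg_cong)
      then have "replicate i (0::nat) = replicate (i-1) 0 @ [0]"
        by (simp only: replicate_Suc replicate_append_same)
      then have "w = replicate (i-1) 0" using a by simp
      then show ?thesis using a unfolding TT_def by auto
    next
      case b
      then have "w = replicate (2*j) 0" by simp
      then show ?thesis using b unfolding TT_def by auto
    qed
  qed
  show ?thesis unfolding is_trie_def using f e s p by blast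
qed

lemma edges0: "num_edges_lab (TT m) 0 = 2*m+1"
proof -
  have "{w \<in> TT m. w \<noteq> [] \<and> last w = 0} = (\<lambda>i. replicate i (0::nat)) ` {1..2*m+1}"
    unfolding TT_def by (auto simp: image_def)
  moreover have "inj_on (\<lambda>i. replicate i (0::nat)) {1..2*m+1}"
    by (auto simp: inj_on_def dest: arg_cong[of _ _ length])
  ultimately show ?thesis unfolding num_edges_lab_def by (simp add: card_image)
qed

lemma edges1: "num_edges_lab (TT m) 1 = m+1"
proof -
  have "{w \<in> TT m. w \<noteq> [] \<and> last w = 1} = (\<lambda>j. replicate (2*j) (0::nat) @ [1]) ` {..m}"
    unfolding TT_def by (auto simp: image_def)
  moreover have "inj_on (\<lambda>j. replicate (2*j) (0::nat) @ [1]) {..m}"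
    by (auto simp: inj_on_def dest: arg_cong[of _ _ length])
  ultimately show ?thesis unfolding num_edges_lab_def by (simp add: card_image)
qed

lemma ent_nonneg: "0 < k \<Longrightarrow> k \<le> n \<Longrightarrow> 0 \<le> ent_term n k"
  unfolding ent_term_def by simp

lemma ent_le2: assumes "0 < k" "k \<le> n" "n \<le> 3*k" shows "ent_term n k \<le> 2"
proof -
  have q: "real n / real k \<le> 4" "0 < real n / real k" "real k / real n \<le> 1" "0 \<le> real k / real n"
    using assms by (auto simp: field_simps)
  have "log 2 (real n / real k) \<le> log 2 4" using q by simp
  also have "log 2 4 = (2::real)"
    using log_pow_cancel[of "2::real" 2] by simp
  finally have l: "log 2 (real n / real k) \<le> 2" .
  have l0: "0 \<le> log 2 (real n / real k)" using assms by simp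
  have "real k / real n * log 2 (real n / real k) \<le> 1 * 2"
    by (rule mult_mono) (use q l l0 in auto)
  then show ?thesis using assms unfolding ent_term_def by simp
qed

lemma ent_third: "ent_term (3*m+3) (m+1) \<ge> 1/3"
proof -
  have a: "real (3*m+3) / real (m+1) = 3" by (simp add: field_simps)
  have b: "real (m+1) / real (3*m+3) = 1/3" by (simp add: field_simps)
  have "log 2 (3::real) \<ge> log 2 2" by simp
  then have "log 2 (3::real) \<ge> 1" by simp
  then show ?thesis unfolding ent_term_def a b by simp
qed

lemma H0_TT: "1/3 \<le> H0 {0,1} (TT m) \<and> H0 {0,1} (TT m) \<le> 8"
proof -
  have e: "H0 {0,1} (TT m) = ent_term (3*m+3) (2*m+1) + ent_term (3*m+3) (m+2)
      + (ent_term (3*m+3) (m+1) + ent_term (3*m+3) (2*m+2))"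
    using edges1[of m] unfolding H0_def nodes_TT by (simp add: edges0)
  have "ent_term (3*m+3) (2*m+1) \<le> 2" "ent_term (3*m+3) (m+2) \<le> 2"
       "ent_term (3*m+3) (m+1) \<le> 2" "ent_term (3*m+3) (2*m+2) \<le> 2"
    by (rule ent_le2; simp)+
  moreover have "0 \<le> ent_term (3*m+3) (2*m+1)" "0 \<le> ent_term (3*m+3) (m+2)"
       "0 \<le> ent_term (3*m+3) (2*m+2)"
    by (rule ent_nonneg; simp)+
  ultimately show ?thesis using e ent_third[of m] by linarith
qed

theorem proposition4:
  shows "\<exists>(Alph :: nat set) (T :: nat \<Rightarrow> nat list set).
     (\<forall>k. is_trie Alph (T k)) \<and>
     (\<forall>N. \<exists>k. num_nodes (T k) \<ge> N) \<and>
     (\<exists>c1 c2 :: real. c1 > 0 \<and> c2 > 0 \<and>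
        (\<forall>k. c1 * real (num_nodes (T k)) \<le> real (xbwt_runs Alph (T k)) \<and>
             real (xbwt_runs Alph (T k)) \<le> c2 * real (num_nodes (T k)) \<and>
             c1 * (real (num_nodes (T k)) * H0 Alph (T k)) \<le> real (xbwt_runs Alph (T k)) \<and>
             real (xbwt_runs Alph (T k)) \<le> c2 * (real (num_nodes (T k)) * H0 Alph (T k))))"
proof (intro exI[of _ "{0,1}"] exI[of _ TT] conjI allI)
  show "is_trie {0,1} (TT k)" for k by (rule trie_TT)
  show "\<exists>k. N \<le> num_nodes (TT k)" for N by (rule exI[of _ N]) (simp add: nodes_TT)
  show "\<exists>c1 c2 :: real. c1 > 0 \<and> c2 > 0 \<and>
        (\<forall>k. c1 * real (num_nodes (TT k)) \<le> real (xbwt_runs {0,1} (TT k)) \<and>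
             real (xbwt_runs {0,1} (TT k)) \<le> c2 * real (num_nodes (TT k)) \<and>
             c1 * (real (num_nodes (TT k)) * H0 {0,1} (TT k)) \<le> real (xbwt_runs {0,1} (TT k)) \<and>
             real (xbwt_runs {0,1} (TT k)) \<le> c2 * (real (num_nodes (TT k)) * H0 {0,1} (TT k)))"
  proof (rule exI[of _ "1/24::real"], rule exI[of _ "3::real"], intro conjI allI)
    fix k
    define n where "n = real (3*k+3)"
    define h where "h = H0 {0,1} (TT k)"
    have h: "1/3 \<le> h" "h \<le> 8" using H0_TT[of k] h_def by auto
    have n: "n \<ge> 0" using n_def by simp
    have r: "real (xbwt_runs {0,1} (TT k)) = real k + 2" using runs_TT[of k] by simp
    have A: "n * h \<le> n * 8" using h n by (intro mult_left_mono) auto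
    have B: "n * (1/3) \<le> n * h" using h n by (intro mult_left_mono) auto
    have nn: "real (num_nodes (TT k)) = n" unfolding n_def nodes_TT ..
    have nk: "n = 3 * real k + 3" unfolding n_def by simp
    show "1/24 * real (num_nodes (TT k)) \<le> real (xbwt_runs {0,1} (TT k))"
      unfolding nn r using nk by linarith
    show "real (xbwt_runs {0,1} (TT k)) \<le> 3 * real (num_nodes (TT k))"
      unfolding nn r using nk by linarith
    show "1/24 * (real (num_nodes (TT k)) * H0 {0,1} (TT k)) \<le> real (xbwt_runs {0,1} (TT k))"
      unfolding nn r h_def[symmetric] using nk A by linarith
    show "real (xbwt_runs {0,1} (TT k)) \<le> 3 * (real (num_nodes (TT k)) * H0 {0,1} (TT k))"
      unfolding nn r h_def[symmetric] using nk B by linarith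
  qed simp_all
qed

end
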